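(* Fix $l^0_{jk},l^0_{ki},l^0_{ij}>0$ and let $\mathcal{W}^{ijk}$ be the set of $(w_i,w_j,w_k)\in\mathbb{R}^3$ for which $l_{ab}>0$ defined by $\cosh\frac{l_{ab}}{2}=e^{w_a+w_b}\cosh\frac{l^0_{ab}}{2}$ exist for $ab\in\{jk,ki,ij\}$. For $(w_i,w_j,w_k)\in\mathcal{W}^{ijk}$, let $\theta^i_{jk},\theta^j_{ki},\theta^k_{ij}$ be the lengths of the sides opposite to the sides of lengths $l_{jk},l_{ki},l_{ij}$ in the hyperbolic right-angled hexagon whose three pairwise non-adjacent sides have lengths $l_{jk},l_{ki},l_{ij}$. Then the Jacobian matrix $\frac{\partial(\theta^i_{jk},\theta^j_{ki},\theta^k_{ij})}{\partial(w_i,w_j,w_k)}$ is symmetric.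
   Context: For any three positive numbers there is a hyperbolic right-angled hexagon, unique up to isometry, whose three pairwise non-adjacent sides have these lengths. *)

theory Defs
  imports "HOL-Analysis.Analysis"
begin

definition edge_len :: "real \<Rightarrow> real \<Rightarrow> real \<Rightarrow> real" where
  "edge_len l0 wa wb = (THE l. l > 0 \<and> cosh (l / 2) = exp (wa + wb) * cosh (l0 / 2))"

text \<open>Length of the side opposite to the side of length a in the hyperbolic
right-angled hexagon whose three pairwise non-adjacent sides have lengths a, b, c
(hyperbolic cosine law for right-angled hexagons).\<close>
definition hex_opp :: "real \<Rightarrow> real \<Rightarrow> real \<Rightarrow> real" where
  "hex_opp a b c = (THE t. t > 0 \<and>
      cosh t = (cosh b * cosh c + cosh a) / (sinh b * sinh c))"

text \<open>Admissible set W^{ijk}; coordinates 1,2,3 stand for i,j,k.\<close>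
definition W_ijk :: "real \<Rightarrow> real \<Rightarrow> real \<Rightarrow> (real^3) set" where
  "W_ijk l0jk l0ki l0ij = {w.
      (\<exists>l>0. cosh (l / 2) = exp (w$2 + w$3) * cosh (l0jk / 2)) \<and>
      (\<exists>l>0. cosh (l / 2) = exp (w$3 + w$1) * cosh (l0ki / 2)) \<and>
      (\<exists>l>0. cosh (l / 2) = exp (w$1 + w$2) * cosh (l0ij / 2))}"

definition theta_map :: "real \<Rightarrow> real \<Rightarrow> real \<Rightarrow> real^3 \<Rightarrow> real^3" where
  "theta_map l0jk l0ki l0ij w =
     (let ljk = edge_len l0jk (w$2) (w$3);
          lki = edge_len l0ki (w$3) (w$1);
          lij = edge_len l0ij (w$1) (w$2)
      in vector [hex_opp ljk lki lij, hex_opp lki lij ljk, hex_opp lij ljk lki])"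

end

theory Submission
  imports Defs
begin

lemma hexu_gt1:
  fixes a b c :: real assumes "b > 0" "c > 0"
  shows "(cosh b * cosh c + cosh a) / (sinh b * sinh c) > 1"
proof -
  have "sinh b * sinh c < cosh b * cosh c"
    using assms sinh_less_cosh_real[of b] sinh_less_cosh_real[of c]
    by (intro mult_strict_mono) auto
  moreover have "cosh a > 0" by simp
  moreover have "sinh b * sinh c > 0" using assms by simp
  ultimately have "sinh b * sinh c < cosh b * cosh c + cosh a"
    using cosh_real_pos[of a] by linarith
  then show ?thesis using \<open>sinh b * sinh c > 0\<close> by (simp add: less_divide_eq)
qed

lemma hex_opp_eq:
  fixes a b c :: real assumes "b > 0" "c > 0"
  shows "hex_opp a b c = arcosh ((cosh b * cosh c + cosh a) / (sinh b * sinh c))"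
proof -
  let ?u = "(cosh b * cosh c + cosh a) / (sinh b * sinh c)"
  have u: "?u > 1" using hexu_gt1 assms by blast
  show ?thesis unfolding hex_opp_def
  proof (rule the_equality)
    have "arcosh ?u > 0" using u arcosh_less_iff_real[of 1 ?u] by simp
    then show "arcosh ?u > 0 \<and> cosh (arcosh ?u) = ?u" using u by simp
  next
    fix t assume "t > 0 \<and> cosh t = ?u"
    then show "t = arcosh ?u" using arcosh_cosh_real[of t] by auto
  qed
qed

lemma edge_len_eq:
  fixes l0 wa wb :: real assumes "exp (wa + wb) * cosh (l0/2) > 1"
  shows "edge_len l0 wa wb = 2 * arcosh (exp (wa + wb) * cosh (l0/2))"
proof -
  let ?q = "exp (wa + wb) * cosh (l0/2)"
  show ?thesis unfolding edge_len_def
  proof (rule the_equality)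
    show "2 * arcosh ?q > 0 \<and> cosh (2 * arcosh ?q / 2) = ?q" using assms by simp
  next
    fix l assume "l > 0 \<and> cosh (l/2) = ?q"
    then show "l = 2 * arcosh ?q" using arcosh_cosh_real[of "l/2"] by auto
  qed
qed

lemma edge_deriv:
  fixes h0 x :: real assumes "exp x * h0 > 1"
  shows "((\<lambda>x. 2 * arcosh (exp x * h0)) has_real_derivative
     2 * cosh (arcosh (exp x * h0)) / sinh (arcosh (exp x * h0))) (at x)"
proof -
  have "exp x * h0 \<ge> 1" using assms by simp
  have d: "((\<lambda>x. exp x * h0) has_real_derivative exp x * h0) (at x)"
    by (auto intro!: derivative_eq_intros)
  have "((\<lambda>x. arcosh (exp x * h0)) has_real_derivative
      1 / sqrt ((exp x * h0)^2 - 1) * (exp x * h0)) (at x)"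
    by (rule DERIV_chain2[OF arcosh_real_has_field_derivative[OF assms] d])
  then have "((\<lambda>x. 2 * arcosh (exp x * h0)) has_real_derivative
      2 * (1 / sqrt ((exp x * h0)^2 - 1) * (exp x * h0))) (at x)"
    by (rule DERIV_cmult)
  then show ?thesis using \<open>exp x * h0 \<ge> 1\<close> by (simp add: sinh_arcosh_real)
qed

lemma half1:
  fixes x :: real assumes "x > 0"
  shows "sinh (2*x) * (2 * cosh x / sinh x) = 2 * (1 + cosh (2*x))"
    and "(2 * cosh x / sinh x) / sinh (2*x) = 2 / (cosh (2*x) - 1)"
proof -
  have s: "sinh x > 0" using assms by simp
  have c: "cosh x > 0" by simp
  show "sinh (2*x) * (2 * cosh x / sinh x) = 2 * (1 + cosh (2*x))"
    using s c cosh_square_eq[of x, unfolded power2_eq_square]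
    unfolding sinh_double cosh_double by (simp add: field_simps power2_eq_square)
  show "(2 * cosh x / sinh x) / sinh (2*x) = 2 / (cosh (2*x) - 1)"
    using s c cosh_square_eq[of x, unfolded power2_eq_square]
    unfolding sinh_double cosh_double by (simp add: field_simps power2_eq_square)
qed

lemma hd_cosh:
  fixes g :: "'a::real_normed_vector \<Rightarrow> real"
  assumes "(g has_derivative g') (at x)"
  shows "((\<lambda>x. cosh (g x)) has_derivative (\<lambda>h. sinh (g x) * g' h)) (at x)"
proof -
  have "(cosh has_field_derivative sinh (g x)) (at (g x))"
    using has_field_derivative_cosh[OF DERIV_ident] by simp
  from has_derivative_compose[OF assms this[unfolded has_field_derivative_def]]
  show ?thesis by (simp add: mult.commute)
qed

lemma hd_sinh:
  fixes g :: "'a::real_normed_vector \<Rightarrow> real"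
  assumes "(g has_derivative g') (at x)"
  shows "((\<lambda>x. sinh (g x)) has_derivative (\<lambda>h. cosh (g x) * g' h)) (at x)"
proof -
  have "(sinh has_field_derivative cosh (g x)) (at (g x))"
    using has_field_derivative_sinh[OF DERIV_ident] by simp
  from has_derivative_compose[OF assms this[unfolded has_field_derivative_def]]
  show ?thesis by (simp add: mult.commute)
qed

definition DD :: "real \<Rightarrow> real \<Rightarrow> real \<Rightarrow> real" where
  "DD a b c = cosh a ^ 2 + cosh b ^ 2 + cosh c ^ 2 + 2 * cosh a * cosh b * cosh c - 1"

lemma alg1:
  fixes sa ca sb cb sc cc p q r :: real
  assumes sb: "sb > 0" and sc: "sc > 0" and eb: "cb * cb = sb * sb + 1" and ec: "cc * cc = sc * sc + 1"
  shows "(((cb * (sc * r) + sb * q * cc) + sa * p) * (sb * sc) - (cb * cc + ca) * (sb * (cc * r) + cb * q * sc))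
      / ((sb * sc) * (sb * sc))
   = (sa * p - (cc + ca * cb) / sb * q - (cb + ca * cc) / sc * r) / (sb * sc)"
proof -
  have "sb \<noteq> 0" "sc \<noteq> 0" using sb sc by auto
  then show ?thesis using eb ec
    apply (simp add: field_simps)
    apply algebra
    done
qed

lemma hex_u_deriv:
  fixes fa fb fc :: "'a::real_normed_vector \<Rightarrow> real"
  assumes da: "(fa has_derivative fa') (at x)" and db: "(fb has_derivative fb') (at x)"
    and dc: "(fc has_derivative fc') (at x)" and pb: "fb x > 0" and pc: "fc x > 0"
  shows "((\<lambda>x. (cosh (fb x) * cosh (fc x) + cosh (fa x)) / (sinh (fb x) * sinh (fc x)))
     has_derivative (\<lambda>h. (sinh (fa x) * fa' h
        - (cosh (fc x) + cosh (fa x) * cosh (fb x)) / sinh (fb x) * fb' h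
        - (cosh (fb x) + cosh (fa x) * cosh (fc x)) / sinh (fc x) * fc' h)
        / (sinh (fb x) * sinh (fc x)))) (at x)"
proof -
  have sb: "sinh (fb x) > 0" and sc: "sinh (fc x) > 0" using pb pc by auto
  have eb: "cosh (fb x) * cosh (fb x) = sinh (fb x) * sinh (fb x) + 1"
    using cosh_square_eq[of "fb x", unfolded power2_eq_square] .
  have ec: "cosh (fc x) * cosh (fc x) = sinh (fc x) * sinh (fc x) + 1"
    using cosh_square_eq[of "fc x", unfolded power2_eq_square] .
  note dN = has_derivative_add[OF has_derivative_mult[OF hd_cosh[OF db] hd_cosh[OF dc]] hd_cosh[OF da]]
  note dS = has_derivative_mult[OF hd_sinh[OF db] hd_sinh[OF dc]]
  have nz: "sinh (fb x) * sinh (fc x) \<noteq> 0" using sb sc by simp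
  note dq = has_derivative_divide'[OF dN dS nz]
  show ?thesis
    by (rule has_derivative_eq_rhs[OF dq], rule ext, rule alg1[OF sb sc eb ec])
qed

lemma hex_deriv:
  fixes fa fb fc :: "'a::real_normed_vector \<Rightarrow> real"
  assumes da: "(fa has_derivative fa') (at x)" and db: "(fb has_derivative fb') (at x)"
    and dc: "(fc has_derivative fc') (at x)" and pb: "fb x > 0" and pc: "fc x > 0"
  shows "((\<lambda>x. arcosh ((cosh (fb x) * cosh (fc x) + cosh (fa x)) / (sinh (fb x) * sinh (fc x))))
     has_derivative (\<lambda>h. (sinh (fa x) * fa' h
        - (cosh (fc x) + cosh (fa x) * cosh (fb x)) / sinh (fb x) * fb' h
        - (cosh (fb x) + cosh (fa x) * cosh (fc x)) / sinh (fc x) * fc' h)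
        / sqrt (DD (fa x) (fb x) (fc x)))) (at x)"
proof -
  define u where "u = (cosh (fb x) * cosh (fc x) + cosh (fa x)) / (sinh (fb x) * sinh (fc x))"
  have u1: "u > 1" unfolding u_def using hexu_gt1 pb pc by blast
  have sb: "sinh (fb x) > 0" and sc: "sinh (fc x) > 0" using pb pc by auto
  have eb: "cosh (fb x) * cosh (fb x) = sinh (fb x) * sinh (fb x) + 1"
    using cosh_square_eq[of "fb x", unfolded power2_eq_square] .
  have ec: "cosh (fc x) * cosh (fc x) = sinh (fc x) * sinh (fc x) + 1"
    using cosh_square_eq[of "fc x", unfolded power2_eq_square] .
  have "u^2 - 1 = DD (fa x) (fb x) (fc x) / (sinh (fb x) * sinh (fc x))^2"
    unfolding u_def DD_def using sb sc eb ec
    apply (simp add: field_simps power2_eq_square)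
    apply algebra
    done
  then have sq: "sqrt (u^2 - 1) = sqrt (DD (fa x) (fb x) (fc x)) / (sinh (fb x) * sinh (fc x))"
    using sb sc by (simp add: real_sqrt_divide)
  note dA = arcosh_real_has_field_derivative[OF u1, of UNIV, unfolded has_field_derivative_def]
  note dc2 = has_derivative_compose[OF hex_u_deriv[OF da db dc pb pc] dA[unfolded u_def]]
  show ?thesis
    apply (rule has_derivative_eq_rhs[OF dc2])
    apply (rule ext)
    using sq sb sc unfolding u_def
    apply (simp add: field_simps)
    done
qed

lemma lin_deriv:
  fixes w :: "real^3"
  shows "((\<lambda>v. v$i + v$j) has_derivative (\<lambda>h. h$i + h$j)) (at w)"
  by (intro has_derivative_add bounded_linear.has_derivative[OF bounded_linear_vec_nth] has_derivative_ident)

lemma edge_deriv_vec: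
  fixes w :: "real^3" and h0 :: real
  assumes "exp (w$i + w$j) * h0 > 1"
  shows "((\<lambda>v. 2 * arcosh (exp (v$i + v$j) * h0)) has_derivative
     (\<lambda>h. (2 * cosh (arcosh (exp (w$i + w$j) * h0)) / sinh (arcosh (exp (w$i + w$j) * h0))) * (h$i + h$j))) (at w)"
  using has_derivative_compose[OF lin_deriv edge_deriv[OF assms, unfolded has_field_derivative_def]]
  by (simp add: mult.commute)

lemma vec3_decomp: "vector [a, b, c] = a *\<^sub>R axis 1 1 + b *\<^sub>R axis 2 1 + c *\<^sub>R (axis 3 1 :: real^3)"
  by (simp add: vec_eq_iff forall_3 axis_def)

lemma edge_gt: "l > 0 \<Longrightarrow> cosh (l / 2) > (1::real)"
  using cosh_real_ge_1[of "l/2"] cosh_real_one_iff[of "l/2"] by linarith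

lemma DD_pos: "DD a b c > 0"
proof -
  have "cosh a ^ 2 \<ge> 1" "cosh b ^ 2 \<ge> 1" "cosh c ^ 2 \<ge> 1"
    by (simp_all add: cosh_square_eq)
  moreover have "cosh a * cosh b * cosh c > 0" by simp
  ultimately show ?thesis unfolding DD_def by linarith
qed

lemma DD_perm: "DD b c a = DD a b c" "DD c a b = DD a b c"
  unfolding DD_def by algebra+

lemma sym_alg:
  fixes sa ca kA sb cb kB sc cc kC :: real
  assumes "sa * kA = 2 * (1 + ca)" "sb * kB = 2 * (1 + cb)" "kC / sc = 2 / (cc - 1)" "cc > 1"
  shows "sa * kA - (cb + ca * cc) / sc * kC = sb * kB - (ca + cb * cc) / sc * kC"
proof -
  have "(cb + ca * cc) / sc * kC = (cb + ca * cc) * (kC / sc)"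
       "(ca + cb * cc) / sc * kC = (ca + cb * cc) * (kC / sc)" by simp_all
  then show ?thesis using assms by (simp add: field_simps) algebra
qed

theorem lemma2:
  fixes l0jk l0ki l0ij :: real and w :: "real^3"
  assumes "l0jk > 0" and "l0ki > 0" and "l0ij > 0"
    and "w \<in> W_ijk l0jk l0ki l0ij"
  shows "\<exists>J :: real^3^3.
           (theta_map l0jk l0ki l0ij has_derivative (\<lambda>h. J *v h)) (at w)
           \<and> transpose J = J"
proof -
  define h1 where "h1 = cosh (l0jk/2)"
  define h2 where "h2 = cosh (l0ki/2)"
  define h3 where "h3 = cosh (l0ij/2)"
  define U where "U = {v::real^3. exp (v$2+v$3) * h1 > 1 \<and> exp (v$3+v$1) * h2 > 1 \<and> exp (v$1+v$2) * h3 > 1}"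
  have openU: "open U" unfolding U_def
    by (intro open_Collect_conj open_Collect_less continuous_intros)
  have wU: "w \<in> U" using assms(4) unfolding W_ijk_def U_def h1_def h2_def h3_def
    by (auto dest!: edge_gt)
  define A where "A = (\<lambda>v::real^3. 2 * arcosh (exp (v$2+v$3) * h1))"
  define B where "B = (\<lambda>v::real^3. 2 * arcosh (exp (v$3+v$1) * h2))"
  define C where "C = (\<lambda>v::real^3. 2 * arcosh (exp (v$1+v$2) * h3))"
  define F where "F = (\<lambda>x y z::real. arcosh ((cosh y * cosh z + cosh x) / (sinh y * sinh z)))"
  have pos: "A v > 0 \<and> B v > 0 \<and> C v > 0" if "v \<in> U" for v
    using that unfolding U_def A_def B_def C_def
    using arcosh_less_iff_real[of 1 "exp (v$2+v$3) * h1"] arcosh_less_iff_real[of 1 "exp (v$3+v$1) * h2"]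
      arcosh_less_iff_real[of 1 "exp (v$1+v$2) * h3"] by auto
  have eqU: "theta_map l0jk l0ki l0ij v = F (A v) (B v) (C v) *\<^sub>R axis 1 1
      + F (B v) (C v) (A v) *\<^sub>R axis 2 1 + F (C v) (A v) (B v) *\<^sub>R axis 3 1" if "v \<in> U" for v
  proof -
    have e1: "edge_len l0jk (v$2) (v$3) = A v" using that unfolding U_def A_def h1_def
      by (simp add: edge_len_eq)
    have e2: "edge_len l0ki (v$3) (v$1) = B v" using that unfolding U_def B_def h2_def
      by (simp add: edge_len_eq)
    have e3: "edge_len l0ij (v$1) (v$2) = C v" using that unfolding U_def C_def h3_def
      by (simp add: edge_len_eq)
    show ?thesis unfolding theta_map_def Let_def e1 e2 e3 vec3_decomp F_def
      using pos[OF that] by (simp add: hex_opp_eq)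
  qed
  define xA where "xA = arcosh (exp (w$2+w$3) * h1)"
  define xB where "xB = arcosh (exp (w$3+w$1) * h2)"
  define xC where "xC = arcosh (exp (w$1+w$2) * h3)"
  define kA where "kA = 2 * cosh xA / sinh xA"
  define kB where "kB = 2 * cosh xB / sinh xB"
  define kC where "kC = 2 * cosh xC / sinh xC"
  have dA: "(A has_derivative (\<lambda>h. kA * (h$2+h$3))) (at w)"
    unfolding A_def kA_def xA_def by (rule edge_deriv_vec) (use wU in \<open>simp add: U_def\<close>)
  have dB: "(B has_derivative (\<lambda>h. kB * (h$3+h$1))) (at w)"
    unfolding B_def kB_def xB_def by (rule edge_deriv_vec) (use wU in \<open>simp add: U_def\<close>)
  have dC: "(C has_derivative (\<lambda>h. kC * (h$1+h$2))) (at w)"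
    unfolding C_def kC_def xC_def by (rule edge_deriv_vec) (use wU in \<open>simp add: U_def\<close>)
  have pA: "A w > 0" and pB: "B w > 0" and pC: "C w > 0" using pos[OF wU] by auto
  note d1 = hex_deriv[OF dA dB dC pB pC]
  note d2 = hex_deriv[OF dB dC dA pC pA]
  note d3 = hex_deriv[OF dC dA dB pA pB]
  note dall = has_derivative_add[OF has_derivative_add[OF has_derivative_scaleR_left[OF d1]
     has_derivative_scaleR_left[OF d2]] has_derivative_scaleR_left[OF d3]]
  have eqU': "F (A v) (B v) (C v) *\<^sub>R axis 1 1
      + F (B v) (C v) (A v) *\<^sub>R axis 2 1 + F (C v) (A v) (B v) *\<^sub>R axis 3 1 = theta_map l0jk l0ki l0ij v" if "v \<in> U" for v
    using eqU[OF that] by simp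
  note dT = has_derivative_transform_within_open[OF dall openU wU eqU'[unfolded F_def]]
  have xA: "xA > 0" and xB: "xB > 0" and xC: "xC > 0" using pA pB pC unfolding A_def B_def C_def xA_def xB_def xC_def by auto
  have Aw: "A w = 2 * xA" and Bw: "B w = 2 * xB" and Cw: "C w = 2 * xC"
    unfolding A_def B_def C_def xA_def xB_def xC_def by auto
  have hA1: "(sinh (A w)) * kA = 2 * (1 + (cosh (A w)))" and hA2: "kA / (sinh (A w)) = 2 / ((cosh (A w)) - 1)"
    unfolding Aw kA_def using half1[OF xA] by auto
  have hB1: "(sinh (B w)) * kB = 2 * (1 + (cosh (B w)))" and hB2: "kB / (sinh (B w)) = 2 / ((cosh (B w)) - 1)"
    unfolding Bw kB_def using half1[OF xB] by auto
  have hC1: "(sinh (C w)) * kC = 2 * (1 + (cosh (C w)))" and hC2: "kC / (sinh (C w)) = 2 / ((cosh (C w)) - 1)"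
    unfolding Cw kC_def using half1[OF xC] by auto
  have gA: "(cosh (A w)) > 1" and gB: "(cosh (B w)) > 1" and gC: "(cosh (C w)) > 1"
    using edge_gt[of "2 * A w"] edge_gt[of "2 * B w"] edge_gt[of "2 * C w"] pA pB pC by auto
  define J :: "real^3^3" where "J = vector [vector [(- ((cosh (C w)) + (cosh (A w)) * (cosh (B w))) / (sinh (B w)) * kB - ((cosh (B w)) + (cosh (A w)) * (cosh (C w))) / (sinh (C w)) * kC) / (sqrt (DD (A w) (B w) (C w))), ((sinh (A w)) * kA - ((cosh (B w)) + (cosh (A w)) * (cosh (C w))) / (sinh (C w)) * kC) / (sqrt (DD (A w) (B w) (C w))), ((sinh (A w)) * kA - ((cosh (C w)) + (cosh (A w)) * (cosh (B w))) / (sinh (B w)) * kB) / (sqrt (DD (A w) (B w) (C w)))], vector [((sinh (B w)) * kB - ((cosh (A w)) + (cosh (B w)) * (cosh (C w))) / (sinh (C w)) * kC) / (sqrt (DD (A w) (B w) (C w))), (- ((cosh (A w)) + (cosh (B w)) * (cosh (C w))) / (sinh (C w)) * kC - ((cosh (C w)) + (cosh (B w)) * (cosh (A w))) / (sinh (A w)) * kA) / (sqrt (DD (A w) (B w) (C w))), ((sinh (B w)) * kB - ((cosh (C w)) + (cosh (B w)) * (cosh (A w))) / (sinh (A w)) * kA) / (sqrt (DD (A w) (B w) (C w)))], vector [((sinh (C w)) * kC - ((cosh (A w)) + (cosh (C w)) * (cosh (B w))) / (sinh (B w)) * kB) / (sqrt (DD (A w) (B w) (C w))), ((sinh (C w))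 * kC - ((cosh (B w)) + (cosh (C w)) * (cosh (A w))) / (sinh (A w)) * kA) / (sqrt (DD (A w) (B w) (C w))), (- ((cosh (B w)) + (cosh (C w)) * (cosh (A w))) / (sinh (A w)) * kA - ((cosh (A w)) + (cosh (C w)) * (cosh (B w))) / (sinh (B w)) * kB) / (sqrt (DD (A w) (B w) (C w)))]]"
  have s12: "(sinh (A w)) * kA - ((cosh (B w)) + (cosh (A w)) * (cosh (C w))) / (sinh (C w)) * kC = (sinh (B w)) * kB - ((cosh (A w)) + (cosh (B w)) * (cosh (C w))) / (sinh (C w)) * kC"
    by (rule sym_alg[OF hA1 hB1 hC2 gC])
  have s13: "(sinh (A w)) * kA - ((cosh (C w)) + (cosh (A w)) * (cosh (B w))) / (sinh (B w)) * kB = (sinh (C w)) * kC - ((cosh (A w)) + (cosh (C w)) * (cosh (B w))) / (sinh (B w)) * kB"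
    by (rule sym_alg[OF hA1 hC1 hB2 gB])
  have s23: "(sinh (B w)) * kB - ((cosh (C w)) + (cosh (B w)) * (cosh (A w))) / (sinh (A w)) * kA = (sinh (C w)) * kC - ((cosh (B w)) + (cosh (C w)) * (cosh (A w))) / (sinh (A w)) * kA"
    by (rule sym_alg[OF hB1 hC1 hA2 gA])
  have tJ: "transpose J = J"
    using s12 s13 s23 unfolding J_def transpose_def by (simp add: vec_eq_iff forall_3)
  have "(theta_map l0jk l0ki l0ij has_derivative (\<lambda>h. J *v h)) (at w)"
    apply (rule has_derivative_eq_rhs[OF dT])
     apply assumption
    apply (rule ext)
    unfolding J_def
    apply (simp add: vec_eq_iff forall_3 matrix_vector_mult_def sum_3 axis_def DD_perm)
    using pos[OF wU] DD_pos[of "A w" "B w" "C w"]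
    apply (simp add: field_simps)
    done
  then show ?thesis using tJ by blast
qed

end
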